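(* Let $p,n$ be positive integers, $\lambda$ a partition of $n$ and $\mu\in\mathrm{Par}(n,p)$, such that $\lambda\in\mathrm{Par}(n,pq)$ for the values of $q$ considered. There is an integer $q_+$ with $1\le q_+\le n$ such that $(\bar\lambda,\bar\mu)\in\Gamma^{p,q}$ for every integer $q\ge q_+$.
   Context: $\mathrm{Par}(n,d)$ is the set of partitions of $n$ with at most $d$ rows. For a partition $\lambda$ of $n$, $\bar\lambda=(\lambda_1/n,\lambda_2/n,\dots)$, padded with zeros to the required length. $\Gamma^{p,q}$ is the set of pairs $(\mathrm{spec}(\rho_{AB}),\mathrm{spec}(\rho_A))$, where $\rho_{AB}$ ranges over density operators on $\mathbb{C}^p\otimes\mathbb{C}^q$, $\rho_A=\mathrm{tr}_B\rho_{AB}$, and spectra are non-increasingly ordered vectors in $\mathbb{R}^{pq}$ and $\mathbb{R}^p$. *)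

theory Defs
  imports "Jordan_Normal_Form.Schur_Decomposition" "Jordan_Normal_Form.Char_Poly"
begin

definition is_partition :: "nat \<Rightarrow> nat list \<Rightarrow> bool" where
  "is_partition n la \<longleftrightarrow> sorted_wrt (\<ge>) la \<and> (\<forall>x\<in>set la. 0 < x) \<and> sum_list la = n"

definition Par :: "nat \<Rightarrow> nat \<Rightarrow> nat list set" where
  "Par n d = {la. is_partition n la \<and> length la \<le> d}"

definition bar :: "nat \<Rightarrow> nat \<Rightarrow> nat list \<Rightarrow> real list" where
  "bar n d la = map (\<lambda>x. real x / real n) la @ replicate (d - length la) 0"

definition density_op :: "nat \<Rightarrow> complex mat \<Rightarrow> bool" where
  "density_op d \<rho> \<longleftrightarrow> \<rho> \<in> carrier_mat d d \<and> mat_adjoint \<rho> = \<rho> \<and>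
     (\<forall>v \<in> carrier_vec d.
        0 \<le> Re (\<Sum>i<d. \<Sum>j<d. cnj (v $ i) * \<rho> $$ (i, j) * v $ j)) \<and>
     (\<Sum>i<d. \<rho> $$ (i, i)) = 1"

(* partial trace over B of an operator on C^p \<otimes> C^q, basis e_i \<otimes> f_j indexed by i*q+j *)
definition ptrace_B :: "nat \<Rightarrow> nat \<Rightarrow> complex mat \<Rightarrow> complex mat" where
  "ptrace_B p q \<rho> = mat p p (\<lambda>(i, i'). \<Sum>j<q. \<rho> $$ (i * q + j, i' * q + j))"

definition is_spec :: "complex mat \<Rightarrow> real list \<Rightarrow> bool" where
  "is_spec A s \<longleftrightarrow> sorted_wrt (\<ge>) s \<and> length s = dim_row A \<and>
     char_poly A = (\<Prod>a\<leftarrow>s. [:- complex_of_real a, 1:])"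

definition Gamma :: "nat \<Rightarrow> nat \<Rightarrow> (real list \<times> real list) set" where
  "Gamma p q = {(s, t). \<exists>\<rho>. density_op (p * q) \<rho> \<and> is_spec \<rho> s \<and>
                        is_spec (ptrace_B p q \<rho>) t}"

end

theory Submission
  imports Defs
begin

lemma ifmult1[simp]: "(if P then 1 else 0) * (x::'a::semiring_1) = (if P then x else 0)" by simp
lemma ifmult2[simp]: "(x::'a::semiring_1) * (if P then 1 else 0) = (if P then x else 0)" by simp

lemma refl_general:
  fixes psi :: "nat \<Rightarrow> nat \<Rightarrow> real" and u0 :: real
  assumes KN: "K \<le> N"
    and orth: "\<And>k l. k < K \<Longrightarrow> l < K \<Longrightarrow> (\<Sum>a<N. psi k a * psi l a) = (if k = l then 1 else 0)"
    and dg: "\<And>k l. k < K \<Longrightarrow> l < K \<Longrightarrow> psi k l = (if k = l then u0 else 0)"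
    and deg: "u0 = 1 \<Longrightarrow> \<forall>k<K. \<forall>a<N. psi k a = (if a = k then 1 else 0)"
  defines "w \<equiv> (\<lambda>k a. psi k a - (if a = k then 1 else 0))"
    and "c \<equiv> (if u0 = 1 then 0 else 1 / (1 - u0))"
  defines "V \<equiv> (\<lambda>a b. (if a = b then 1 else 0) - c * (\<Sum>k<K. w k a * w k b))"
  shows "\<And>a l. a < N \<Longrightarrow> l < K \<Longrightarrow> V a l = psi l a"
    and "\<And>a b. a < N \<Longrightarrow> b < N \<Longrightarrow> (\<Sum>x<N. V a x * V x b) = (if a = b then 1 else 0)"
proof -
  have G: "(\<Sum>a<N. w k a * w l a) = (if k = l then 2 - 2 * u0 else 0)" if "k < K" "l < K" for k l
  proof -
    have e1: "(\<Sum>a<N. psi k a * (if a = l then 1 else 0)) = psi k l"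
      using that KN by (simp add: sum.delta sum.delta')
    have e2: "(\<Sum>a<N. (if a = k then 1 else 0) * psi l a) = psi l k"
      using that KN by (simp add: sum.delta sum.delta')
    have e3: "(\<Sum>a<N. (if a = k then 1 else (0::real)) * (if a = l then 1 else 0)) = (if k = l then 1 else 0)"
      using that KN by (simp add: sum.delta sum.delta')
    have "(\<Sum>a<N. w k a * w l a) = (\<Sum>a<N. psi k a * psi l a) - (\<Sum>a<N. psi k a * (if a = l then 1 else 0))
        - (\<Sum>a<N. (if a = k then 1 else 0) * psi l a) + (\<Sum>a<N. (if a = k then 1 else (0::real)) * (if a = l then 1 else 0))"
      unfolding w_def by (simp add: algebra_simps sum.distrib sum_subtractf)
    also have "\<dots> = (if k = l then 2 - 2 * u0 else 0)"
      unfolding e1 e2 e3 using orth[OF that] dg[OF that] dg[OF that(2,1)] by auto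
    finally show ?thesis .
  qed
  have wl: "w k l = (if k = l then u0 - 1 else 0)" if "k < K" "l < K" for k l
    using dg[OF that] unfolding w_def by auto
  have w0: "u0 = 1 \<Longrightarrow> w k a = 0" if "k < K" "a < N" for k a
    using deg that unfolding w_def by auto
  show V1: "V a l = psi l a" if "a < N" "l < K" for a l
  proof (cases "u0 = 1")
    case True
    then show ?thesis using deg that unfolding V_def c_def by auto
  next
    case False
    have "(\<Sum>k<K. w k a * w k l) = w l a * (u0 - 1)"
      using that by (simp add: wl if_distrib sum.delta cong: if_cong)
    then show ?thesis using False unfolding V_def c_def w_def by (auto simp: field_simps)
  qed
  show "(\<Sum>x<N. V a x * V x b) = (if a = b then 1 else 0)" if "a < N" "b < N" for a b
  proof (cases "u0 = 1")
    case True
    then have "V x y = (if x = y then 1 else 0)" if "x < N" for x y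
      unfolding V_def c_def by simp
    then show ?thesis using that by (simp add: sum.delta sum.delta')
  next
    case False
    define S where "S = (\<lambda>a b. (\<Sum>k<K. w k a * w k b))"
    have SS: "(\<Sum>x<N. S a x * S x b) = (2 - 2 * u0) * S a b"
    proof -
      have "(\<Sum>x<N. S a x * S x b) = (\<Sum>x<N. \<Sum>k<K. \<Sum>l<K. w k a * w l b * (w k x * w l x))"
        unfolding S_def sum_product by (intro sum.cong refl) (simp add: algebra_simps)
      also have "\<dots> = (\<Sum>k<K. \<Sum>l<K. w k a * w l b * (\<Sum>x<N. w k x * w l x))"
        by (simp add: sum_distrib_left sum.swap[of _ "{..<N}"])
      also have "\<dots> = (\<Sum>k<K. \<Sum>l<K. w k a * w l b * (if k = l then 2 - 2 * u0 else 0))"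
        by (intro sum.cong refl) (simp add: G)
      also have "\<dots> = (2 - 2 * u0) * S a b"
        unfolding S_def by (simp add: if_distrib sum.delta sum_distrib_left algebra_simps cong: if_cong)
      finally show ?thesis .
    qed
    have Vd: "V = (\<lambda>a b. (if a = b then 1 else 0) - c * S a b)" unfolding V_def S_def ..
    have "(\<Sum>x<N. V a x * V x b) = (\<Sum>x<N. (if a = x then 1 else 0) * (if x = b then 1 else 0))
       - c * (\<Sum>x<N. (if a = x then 1 else 0) * S x b) - c * (\<Sum>x<N. S a x * (if x = b then 1 else 0))
       + c * c * (\<Sum>x<N. S a x * S x b)"
      unfolding Vd by (simp add: algebra_simps sum.distrib sum_subtractf sum_distrib_left)
    also have "\<dots> = (if a = b then 1 else 0) - 2 * c * S a b + c * c * ((2 - 2 * u0) * S a b)"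
      unfolding SS using that by (simp add: sum.delta sum.delta')
    also have "\<dots> = (if a = b then 1 else 0)"
    proof -
      have cc: "c * (1 - u0) = 1" using False by (simp add: c_def)
      have "c*c*((2-2*u0)*S a b) = 2*c*S a b * (c*(1-u0))" by (simp add: algebra_simps)
      then show ?thesis using cc by simp
    qed
    finally show ?thesis .
  qed
qed

lemma diag_char_poly:
  fixes d :: "nat \<Rightarrow> real"
  shows "char_poly (mat N N (\<lambda>(a,b). if a = b then complex_of_real (d a) else 0))
     = (\<Prod>x\<leftarrow>map d [0..<N]. [:- complex_of_real x, 1:])"
proof -
  let ?D = "mat N N (\<lambda>(a,b). if a = b then complex_of_real (d a) else 0)"
  have "char_poly ?D = (\<Prod>a\<leftarrow>diag_mat ?D. [:- a, 1:])"
    by (rule char_poly_upper_triangular[of _ N]) (auto simp: upper_triangular_def)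
  also have "diag_mat ?D = map (\<lambda>a. complex_of_real (d a)) [0..<N]"
    by (simp add: diag_mat_def list_eq_iff_nth_eq)
  finally show ?thesis by (simp add: o_def)
qed

lemma sim_spec:
  fixes psi :: "nat \<Rightarrow> nat \<Rightarrow> real" and u0 :: real and lam :: "nat \<Rightarrow> real"
  assumes KN: "K \<le> N"
    and orth: "\<And>k l. k < K \<Longrightarrow> l < K \<Longrightarrow> (\<Sum>a<N. psi k a * psi l a) = (if k = l then 1 else 0)"
    and dg: "\<And>k l. k < K \<Longrightarrow> l < K \<Longrightarrow> psi k l = (if k = l then u0 else 0)"
    and deg: "u0 = 1 \<Longrightarrow> \<forall>k<K. \<forall>a<N. psi k a = (if a = k then 1 else 0)"
  shows "char_poly (mat N N (\<lambda>(a,b). complex_of_real (\<Sum>k<K. lam k * psi k a * psi k b)))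
     = (\<Prod>x\<leftarrow>map (\<lambda>a. if a < K then lam a else 0) [0..<N]. [:- complex_of_real x, 1:])"
proof -
  define w where "w \<equiv> (\<lambda>k a. psi k a - (if a = k then 1 else (0::real)))"
  define c where "c \<equiv> (if u0 = 1 then 0 else 1 / (1 - u0))"
  define V where "V \<equiv> (\<lambda>a b. (if a = b then 1 else 0) - c * (\<Sum>k<K. w k a * w k b))"
  have R1: "V a l = psi l a" if "a < N" "l < K" for a l
    using refl_general(1)[OF KN orth dg deg that] unfolding V_def w_def c_def by simp
  have R2: "(\<Sum>x<N. V a x * V x b) = (if a = b then 1 else 0)" if "a < N" "b < N" for a b
    using refl_general(2)[OF KN orth dg deg that] unfolding V_def w_def c_def by simp
  have Vsym: "V a b = V b a" for a b unfolding V_def by (simp add: mult.commute)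
  define d where "d = (\<lambda>a. if a < K then lam a else 0)"
  define Vc where "Vc = mat N N (\<lambda>(a,b). complex_of_real (V a b))"
  define D where "D = mat N N (\<lambda>(a,b). if a = b then complex_of_real (d a) else 0)"
  define rho where "rho = mat N N (\<lambda>(a,b). complex_of_real (\<Sum>k<K. lam k * psi k a * psi k b))"
  have VV: "Vc * Vc = 1\<^sub>m N"
  proof (rule eq_matI)
    fix i j assume ij: "i < dim_row (1\<^sub>m N)" "j < dim_col (1\<^sub>m N)"
    have "(Vc * Vc) $$ (i, j) = complex_of_real (\<Sum>x<N. V i x * V x j)"
      using ij by (simp add: Vc_def scalar_prod_def atLeast0LessThan)
    also have "\<dots> = 1\<^sub>m N $$ (i, j)" using ij R2[of i j] by simp
    finally show "(Vc * Vc) $$ (i, j) = 1\<^sub>m N $$ (i, j)" .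
  qed (auto simp: Vc_def)
  have VD: "Vc * D = mat N N (\<lambda>(a,y). complex_of_real (V a y * d y))"
  proof (rule eq_matI)
    fix i j assume ij: "i < dim_row (mat N N (\<lambda>(a,y). complex_of_real (V a y * d y)))"
      "j < dim_col (mat N N (\<lambda>(a,y). complex_of_real (V a y * d y)))"
    then show "(Vc * D) $$ (i, j) = mat N N (\<lambda>(a,y). complex_of_real (V a y * d y)) $$ (i, j)"
      by (simp add: Vc_def D_def scalar_prod_def atLeast0LessThan if_distrib sum.delta' cong: if_cong)
  qed (auto simp: Vc_def D_def)
  have rVDV: "rho = Vc * D * Vc"
  proof (rule eq_matI)
    fix i j assume ij: "i < dim_row (Vc * D * Vc)" "j < dim_col (Vc * D * Vc)"
    then have ij': "i < N" "j < N" by (auto simp: Vc_def)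
    have "(Vc * D * Vc) $$ (i, j) = complex_of_real (\<Sum>y<N. V i y * d y * V y j)"
      using ij' unfolding VD by (simp add: Vc_def scalar_prod_def atLeast0LessThan)
    also have "(\<Sum>y<N. V i y * d y * V y j) = (\<Sum>y<K. V i y * lam y * V j y)"
    proof -
      have "(\<Sum>y<N. V i y * d y * V y j) = (\<Sum>y<N. if y < K then V i y * lam y * V j y else 0)"
        by (intro sum.cong refl) (simp add: d_def Vsym[of _ j])
      also have "\<dots> = (\<Sum>y\<in>{..<N} \<inter> {y. y < K}. V i y * lam y * V j y)"
        by (simp add: sum.inter_restrict)
      also have "{..<N} \<inter> {y. y < K} = {..<K}" using KN by auto
      finally show ?thesis .
    qed
    also have "\<dots> = (\<Sum>k<K. lam k * psi k i * psi k j)"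
      using ij' by (intro sum.cong refl) (simp add: R1)
    finally show "rho $$ (i, j) = (Vc * D * Vc) $$ (i, j)" using ij' by (simp add: rho_def)
  qed (auto simp: rho_def Vc_def)
  have "similar_mat rho D"
    unfolding similar_mat_def similar_mat_wit_def
    apply (rule exI[of _ Vc], rule exI[of _ Vc])
    using VV rVDV by (auto simp: Let_def) (auto simp: rho_def D_def Vc_def)
  then have "char_poly rho = char_poly D" by (rule char_poly_similar)
  then show ?thesis unfolding rho_def D_def d_def diag_char_poly .
qed

lemma density_gen:
  fixes psi :: "nat \<Rightarrow> nat \<Rightarrow> real" and lam :: "nat \<Rightarrow> real"
  assumes nrm: "\<And>k. k < K \<Longrightarrow> (\<Sum>a<N. psi k a * psi k a) = 1"
    and lpos: "\<And>k. k < K \<Longrightarrow> 0 \<le> lam k"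
    and lsum: "(\<Sum>k<K. lam k) = 1"
  shows "density_op N (mat N N (\<lambda>(a,b). complex_of_real (\<Sum>k<K. lam k * psi k a * psi k b)))"
proof -
  define rho where "rho = mat N N (\<lambda>(a,b). complex_of_real (\<Sum>k<K. lam k * psi k a * psi k b))"
  have adj: "mat_adjoint rho = rho"
  proof (rule eq_matI)
    fix i j assume "i < dim_row rho" "j < dim_col rho"
    then show "mat_adjoint rho $$ (i, j) = rho $$ (i, j)"
      by (simp add: mat_adjoint_def rho_def mat_of_rows_index mult.commute mult.left_commute)
  qed (auto simp: mat_adjoint_def rho_def)
  have psd: "0 \<le> Re (\<Sum>i<N. \<Sum>j<N. cnj (v $ i) * rho $$ (i, j) * v $ j)" for v :: "complex vec"
  proof -
    define z where "z = (\<lambda>k. \<Sum>j<N. complex_of_real (psi k j) * v $ j)"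
    have "(\<Sum>i<N. \<Sum>j<N. cnj (v $ i) * rho $$ (i, j) * v $ j)
        = (\<Sum>i<N. \<Sum>j<N. \<Sum>k<K. complex_of_real (lam k) * ((complex_of_real (psi k i) * cnj (v $ i)) * (complex_of_real (psi k j) * v $ j)))"
      by (intro sum.cong refl) (simp add: rho_def sum_distrib_left sum_distrib_right algebra_simps)
    also have "\<dots> = (\<Sum>k<K. \<Sum>i<N. \<Sum>j<N. complex_of_real (lam k) * ((complex_of_real (psi k i) * cnj (v $ i)) * (complex_of_real (psi k j) * v $ j)))"
      by (simp add: sum.swap[of _ "{..<K}"])
    also have "\<dots> = (\<Sum>k<K. complex_of_real (lam k) * (cnj (z k) * z k))"
    proof (intro sum.cong refl)
      fix k
      have "cnj (z k) = (\<Sum>i<N. complex_of_real (psi k i) * cnj (v $ i))" by (simp add: z_def)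
      then have "cnj (z k) * z k = (\<Sum>i<N. \<Sum>j<N. (complex_of_real (psi k i) * cnj (v $ i)) * (complex_of_real (psi k j) * v $ j))"
        by (simp only: z_def sum_product)
      then show "(\<Sum>i<N. \<Sum>j<N. complex_of_real (lam k) * ((complex_of_real (psi k i) * cnj (v $ i)) * (complex_of_real (psi k j) * v $ j))) = complex_of_real (lam k) * (cnj (z k) * z k)"
        by (simp add: sum_distrib_left)
    qed
    also have "\<dots> = complex_of_real (\<Sum>k<K. lam k * (cmod (z k))\<^sup>2)"
      by (simp only: of_real_sum of_real_mult complex_norm_square mult.commute)
    finally show ?thesis using lpos by (simp add: sum_nonneg del: of_real_sum) (intro sum_nonneg, simp)
  qed
  have tr: "(\<Sum>i<N. rho $$ (i, i)) = 1"
  proof -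
    have "(\<Sum>i<N. rho $$ (i, i)) = complex_of_real (\<Sum>i<N. \<Sum>k<K. lam k * (psi k i * psi k i))"
      by (simp add: rho_def mult.assoc)
    also have "(\<Sum>i<N. \<Sum>k<K. lam k * (psi k i * psi k i)) = (\<Sum>k<K. lam k * (\<Sum>i<N. psi k i * psi k i))"
      by (simp add: sum.swap[of _ "{..<N}"] sum_distrib_left)
    also have "\<dots> = 1" using lsum nrm by simp
    finally show ?thesis by simp
  qed
  show ?thesis unfolding density_op_def rho_def[symmetric] using adj psd tr by (simp add: rho_def)
qed


lemma mod_cancel_lt:
  fixes i k l q :: nat
  assumes "k < q" "l < q" "(i + k) mod q = (i + l) mod q"
  shows "k = l"
proof -
  have *: "k = l" if "k \<le> l" "l < q" "(i + k) mod q = (i + l) mod q" for k l :: nat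
  proof -
    have "q dvd (i + l) - (i + k)" using that mod_eq_dvd_iff_nat[of "i+k" "i+l" q] by simp
    then have "q dvd l - k" by simp
    then have "l - k = 0" using that by (metis diff_le_self dvd_imp_le le_neq_implies_less less_le_trans not_gr0 order.irrefl)
    then show ?thesis using that by simp
  qed
  show ?thesis using *[of k l] *[of l k] assms by (cases "k \<le> l") auto
qed

lemma sum_split_add: "(\<Sum>a<m+(q::nat). f a) = (\<Sum>a<m. f a) + (\<Sum>j<q. f (m+j))"
  by (induction q) (simp_all add: add.assoc)

lemma sum_prod_index: "(\<Sum>a<p*(q::nat). f a) = (\<Sum>i<p. \<Sum>j<q. f (i*q+j))"
proof (induction p)
  case (Suc p)
  have "(\<Sum>a<Suc p*q. f a) = (\<Sum>a<p*q+q. f a)" by (simp add: add.commute)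
  also have "\<dots> = (\<Sum>a<p*q. f a) + (\<Sum>j<q. f (p*q+j))" by (rule sum_split_add)
  finally show ?case using Suc by simp
qed simp

lemma partition_length: "is_partition n la \<Longrightarrow> length la \<le> n"
proof -
  assume "is_partition n la"
  then have "\<forall>x\<in>set la. 0 < x" "sum_list la = n" by (auto simp: is_partition_def)
  moreover have "\<forall>x\<in>set la. 0 < x \<Longrightarrow> length la \<le> sum_list la" for la :: "nat list"
    by (induction la) auto
  ultimately show ?thesis by auto
qed

lemma bar_length: "length la \<le> d \<Longrightarrow> length (bar n d la) = d"
  by (simp add: bar_def)

lemma bar_nth: "i < d \<Longrightarrow> bar n d la ! i = (if i < length la then real (la ! i) / real n else 0)"
  by (simp add: bar_def nth_append)

lemma bar_nonneg: "i < d \<Longrightarrow> 0 \<le> bar n d la ! i"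
  by (simp add: bar_nth)

lemma sorted_rep0: "sorted_wrt (\<ge>) (replicate k (0::real))"
  by (induction k) auto

lemma bar_sorted: "is_partition n la \<Longrightarrow> sorted_wrt (\<ge>) (bar n d la)"
  unfolding bar_def is_partition_def
  by (auto simp: sorted_wrt_append sorted_wrt_map sorted_rep0 divide_right_mono elim!: sorted_wrt_mono_rel[rotated])

lemma sum_list_div: "sum_list (map (\<lambda>x. real x / real n) la) = real (sum_list la) / real n"
  by (induction la) (auto simp: add_divide_distrib)

lemma bar_sum: "is_partition n la \<Longrightarrow> 0 < n \<Longrightarrow> sum_list (bar n d la) = 1"
  unfolding bar_def is_partition_def by (simp add: sum_list_div sum_list_replicate)

lemma idx_lt: "i < p \<Longrightarrow> j < q \<Longrightarrow> i * q + j < p * (q::nat)"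
proof -
  assume "i < p" "j < q"
  then have "i * q + j < (i + 1) * q" by simp
  also have "\<dots> \<le> p * q" using \<open>i < p\<close> by (intro mult_right_mono) auto
  finally show ?thesis .
qed

theorem corollary1:
  fixes p n :: nat and la mu :: "nat list"
  assumes "0 < p" and "0 < n"
    and "is_partition n la"
    and "mu \<in> Par n p"
  shows "\<exists>qp::nat. 1 \<le> qp \<and> qp \<le> n \<and>
           (\<forall>q \<ge> qp. la \<in> Par n (p * q) \<longrightarrow>
              (bar n (p * q) la, bar n p mu) \<in> Gamma p q)"
proof -
  define L where "L = length la"
  define m where "m = length mu"
  have muP: "is_partition n mu" and mp: "m \<le> p" using assms(4) by (auto simp: Par_def m_def)
  have Ln: "L \<le> n" using partition_length[OF assms(3)] by (simp add: L_def)
  have mn: "m \<le> n" using partition_length[OF muP] by (simp add: m_def)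
  show ?thesis
  proof (intro exI[of _ "max 1 (max L m)"] conjI allI impI)
    show "1 \<le> max 1 (max L m)" by simp
    show "max 1 (max L m) \<le> n" using Ln mn assms(2) by simp
    fix q assume q: "max 1 (max L m) \<le> q" and laP: "la \<in> Par n (p * q)"
    have q0: "0 < q" and Lq: "L \<le> q" and mq: "m \<le> q" using q by auto
    have qpq: "q \<le> p * q" using assms(1) by simp
    define mb where "mb = bar n p mu"
    define lb where "lb = bar n (p * q) la"
    have mb_len: "length mb = p" using mp by (simp add: mb_def bar_length m_def)
    have lb_len: "length lb = p * q" unfolding lb_def by (rule bar_length) (use Lq qpq in \<open>simp only: L_def[symmetric]\<close>)
    have mb_nth: "mb ! i = (if i < m then real (mu ! i) / real n else 0)" if "i < p" for i
      using that by (simp add: mb_def bar_nth m_def)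
    have lb_nth: "lb ! i = (if i < L then real (la ! i) / real n else 0)" if "i < p * q" for i
      using that by (simp add: lb_def bar_nth L_def)
    have mb_nn: "0 \<le> mb ! i" if "i < p" for i using that by (simp add: mb_def bar_nonneg)
    have lb_nn: "0 \<le> lb ! i" if "i < p * q" for i using that by (simp add: lb_def bar_nonneg)
    have mb_sum: "(\<Sum>i<p. mb ! i) = 1"
      using bar_sum[OF muP assms(2), of p] mb_len
      by (simp add: mb_def[symmetric] sum_list_sum_nth atLeast0LessThan)
    have lam_sum: "(\<Sum>k<q. lb ! k) = 1"
    proof -
      have "(\<Sum>k<q. lb ! k) = (\<Sum>k<p*q. lb ! k)"
        by (rule sum.mono_neutral_left) (use qpq Lq lb_nth in auto)
      also have "\<dots> = 1"
        using bar_sum[OF assms(3) assms(2), of "p*q"] lb_len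
        by (simp add: lb_def[symmetric] sum_list_sum_nth atLeast0LessThan)
      finally show ?thesis .
    qed
    define u where "u = (\<lambda>i. sqrt (mb ! i))"
    have uu: "u i * u i = mb ! i" if "i < p" for i
      using mb_nn[OF that] by (simp add: u_def)
    define psi where "psi = (\<lambda>k a. if a mod q = (a div q + k) mod q then u (a div q) else 0)"
    have psi_ij: "psi k (i * q + j) = (if j = (i + k) mod q then u i else 0)" if "j < q" for k i j
      using that q0 by (simp add: psi_def)
    define lam where "lam = (\<lambda>k. lb ! k)"
    define rho where "rho = mat (p*q) (p*q) (\<lambda>(a,b). complex_of_real (\<Sum>k<q. lam k * psi k a * psi k b))"
    have orth: "(\<Sum>a<p*q. psi k a * psi l a) = (if k = l then 1 else 0)" if "k < q" "l < q" for k l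
    proof -
      have "(\<Sum>a<p*q. psi k a * psi l a) = (\<Sum>i<p. \<Sum>j<q. psi k (i*q+j) * psi l (i*q+j))"
        by (rule sum_prod_index)
      also have "\<dots> = (\<Sum>i<p. if (i + k) mod q = (i + l) mod q then u i * u i else 0)"
        using q0 by (intro sum.cong refl) (simp add: psi_ij if_distrib sum.delta' cong: if_cong)
      also have "\<dots> = (if k = l then 1 else 0)"
      proof (cases "k = l")
        case True
        then show ?thesis using mb_sum uu by simp
      next
        case False
        then have "\<forall>i. (i + k) mod q \<noteq> (i + l) mod q" using mod_cancel_lt[OF that] by blast
        then show ?thesis using \<open>k \<noteq> l\<close> by simp
      qed
      finally show ?thesis .
    qed
    have dg: "psi k l = (if k = l then u 0 else 0)" if "k < q" "l < q" for k l
      using that by (auto simp: psi_def)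
    have deg: "\<forall>k<q. \<forall>a<p*q. psi k a = (if a = k then 1 else 0)" if u1: "u 0 = 1"
    proof (intro allI impI)
      fix k a assume k: "k < q" and a: "a < p * q"
      have mb0: "mb ! 0 = 1" using u1 uu[of 0] assms(1) by simp
      have mbz: "mb ! i = 0" if "0 < i" "i < p" for i
      proof -
        have "(\<Sum>i<p. mb ! i) = mb ! 0 + mb ! i + (\<Sum>j\<in>{..<p} - {0, i}. mb ! j)"
          using that assms(1) by (simp add: sum.remove[of "{..<p}" 0] sum.remove[of "{..<p} - {0}" i] insert_Diff_if Diff_insert2[symmetric])
        moreover have "0 \<le> (\<Sum>j\<in>{..<p} - {0, i}. mb ! j)" by (intro sum_nonneg) (simp add: mb_nn)
        ultimately show ?thesis using mb_sum mb0 mb_nn[OF that(2)] by simp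
      qed
      have adq: "a div q < p" using a q0 by (simp add: less_mult_imp_div_less mult.commute)
      show "psi k a = (if a = k then 1 else 0)"
      proof (cases "a div q = 0")
        case True
        then have "a < q" using q0 by (simp add: div_eq_0_iff)
        then show ?thesis using True k u1 by (simp add: psi_def)
      next
        case False
        then have "q \<le> a" using q0 by (simp add: div_eq_0_iff)
        then show ?thesis using False k mbz[OF _ adq] by (simp add: psi_def u_def)
      qed
    qed
    have spec1: "char_poly rho = (\<Prod>x\<leftarrow>lb. [:- complex_of_real x, 1:])"
    proof -
      have "char_poly rho = (\<Prod>x\<leftarrow>map (\<lambda>a. if a < q then lam a else 0) [0..<p*q]. [:- complex_of_real x, 1:])"
        unfolding rho_def by (rule sim_spec[OF qpq orth dg deg])
      also have "map (\<lambda>a. if a < q then lam a else 0) [0..<p*q] = lb"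
        by (rule nth_equalityI) (use lb_len Lq lb_nth in \<open>auto simp: lam_def\<close>)
      finally show ?thesis .
    qed
    have dens: "density_op (p*q) rho"
      unfolding rho_def
    proof (rule density_gen)
      show "(\<Sum>a<p * q. psi k a * psi k a) = 1" if "k < q" for k using orth[OF that that] by simp
      show "0 \<le> lam k" if "k < q" for k using lb_nn[of k] that qpq unfolding lam_def by linarith
      show "(\<Sum>k<q. lam k) = 1" using lam_sum by (simp add: lam_def)
    qed
    have ptr: "ptrace_B p q rho = mat p p (\<lambda>(i,i'). if i = i' then complex_of_real (mb ! i) else 0)"
    proof (rule eq_matI)
      fix i i' assume ii: "i < dim_row (mat p p (\<lambda>(i,i'). if i = i' then complex_of_real (mb ! i) else 0))"
        "i' < dim_col (mat p p (\<lambda>(i,i'). if i = i' then complex_of_real (mb ! i) else (0::complex)))"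
      then have i: "i < p" and i': "i' < p" by auto
      have "ptrace_B p q rho $$ (i, i') = (\<Sum>j<q. rho $$ (i * q + j, i' * q + j))"
        using i i' by (simp add: ptrace_B_def)
      also have "\<dots> = complex_of_real (\<Sum>j<q. \<Sum>k<q. lam k * psi k (i*q+j) * psi k (i'*q+j))"
        using i i' idx_lt by (simp add: rho_def)
      also have "(\<Sum>j<q. \<Sum>k<q. lam k * psi k (i*q+j) * psi k (i'*q+j))
          = (\<Sum>k<q. lam k * (if (k + i) mod q = (k + i') mod q then u i * u i' else 0))"
      proof -
        have inner: "(\<Sum>j<q. lam k * psi k (i*q+j) * psi k (i'*q+j))
           = lam k * (if (k + i) mod q = (k + i') mod q then u i * u i' else 0)" for k
        proof -
          have "(\<Sum>j<q. lam k * psi k (i*q+j) * psi k (i'*q+j))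
             = (\<Sum>j<q. if j = (i + k) mod q then (if j = (i' + k) mod q then lam k * (u i * u i') else 0) else 0)"
            by (intro sum.cong refl) (simp add: psi_ij)
          also have "\<dots> = (if (i + k) mod q = (i' + k) mod q then lam k * (u i * u i') else 0)"
            using q0 by (simp add: sum.delta')
          finally show ?thesis by (simp add: add.commute)
        qed
        show ?thesis by (subst sum.swap) (simp add: inner)
      qed
      also have "\<dots> = (if i = i' then mb ! i else 0)"
      proof (cases "i = i'")
        case True
        then show ?thesis using uu[OF i] lam_sum by (simp add: lam_def sum_distrib_right[symmetric])
      next
        case False
        have "lam k * (if (k + i) mod q = (k + i') mod q then u i * u i' else 0) = 0" if "k < q" for k
        proof (cases "i < m \<and> i' < m")
          case True
          then have "(k + i) mod q \<noteq> (k + i') mod q" using mod_cancel_lt[of i q i' k] False mq by auto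
          then show ?thesis by simp
        next
          case False
          then have "u i = 0 \<or> u i' = 0" using mb_nth[OF i] mb_nth[OF i'] by (auto simp: u_def)
          then show ?thesis by auto
        qed
        then show ?thesis using False by (simp add: sum.neutral)
      qed
      finally show "ptrace_B p q rho $$ (i, i') = mat p p (\<lambda>(i,i'). if i = i' then complex_of_real (mb ! i) else 0) $$ (i, i')"
        using i i' by simp
    qed (auto simp: ptrace_B_def)
    have spec2: "char_poly (ptrace_B p q rho) = (\<Prod>x\<leftarrow>mb. [:- complex_of_real x, 1:])"
    proof -
      have "char_poly (ptrace_B p q rho) = (\<Prod>x\<leftarrow>map (\<lambda>i. mb ! i) [0..<p]. [:- complex_of_real x, 1:])"
        unfolding ptr by (rule diag_char_poly)
      also have "map (\<lambda>i. mb ! i) [0..<p] = mb" using mb_len map_nth by metis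
      finally show ?thesis .
    qed
    have "is_spec rho lb"
      unfolding is_spec_def using spec1 lb_len bar_sorted[OF assms(3)] by (simp add: lb_def rho_def)
    moreover have "is_spec (ptrace_B p q rho) mb"
      unfolding is_spec_def using spec2 mb_len bar_sorted[OF muP] by (simp add: mb_def ptrace_B_def)
    ultimately show "(bar n (p * q) la, bar n p mu) \<in> Gamma p q"
      unfolding Gamma_def using dens by (auto simp: lb_def mb_def)
  qed
qed

end
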